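(* Let $n \ge 2$ and let $n_1, m_1 \in \mathbb{Z}$ be such that $\mathcal{P}_n(n_1;m_1)$ is a regular presentation of $Q_{4n}$. Then $\mathcal{P}_n(m_1;n_1)$ is a regular presentation of $Q_{4n}$ and $\mathcal{P}_n(n_1;m_1) \simeq_{Q^*} \mathcal{P}_n(m_1;n_1)$. Furthermore, $\mathcal{E}_{n,r} \simeq_{Q^*} \mathcal{E}_{n,1-r}$ for all $r \in \mathbb{Z}$, where $\mathcal{E}_{n,r} := \mathcal{P}_n(2;1-r)$.
   Context: $Q_{4n}$ is identified with $\langle x, y \mid x^n y^{-2}, xyxy^{-1} \rangle$; $\mathcal{P}_n(n_1;m_1) = \langle x, y \mid x^n y^{-2},\ x^{n_1} y x^{m_1} y^{-1} x^{1-n_1} y x^{1-m_1} y^{-1} \rangle$, regular if $x\mapsto x$, $y\mapsto y$ induces an isomorphism of the presented group onto $Q_{4n}$. Two finite presentations on the same generators are $Q^*$-equivalent ($\simeq_{Q^*}$) if related by a finite sequence of the moves: replace a relator $r_i$ by $r_ir_j$ ($j\neq i$); replace $r_i$ by $r_i^{-1}$; replace $r_i$ by $wr_iw^{-1}$ for $w$ in the free group on the generators; replace every relator $r_i$ by $\phi(r_i)$ for an automorphism $\phi$ of the free group on the generators. *)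

theory Defs
  imports Main
begin

datatype gen = GX | GY

text \<open>A letter is a generator with an exponent sign (True = +1, False = -1).
  Elements of the free group F(x,y) are the freely reduced words.\<close>
type_synonym word = "(gen \<times> bool) list"

fun inv_letter :: "gen \<times> bool \<Rightarrow> gen \<times> bool" where
  "inv_letter (g, b) = (g, \<not> b)"

definition inv_word :: "word \<Rightarrow> word" where
  "inv_word w = rev (map inv_letter w)"

fun red_step :: "gen \<times> bool \<Rightarrow> word \<Rightarrow> word" where
  "red_step a [] = [a]"
| "red_step a (b # bs) = (if b = inv_letter a then bs else a # b # bs)"

definition reduce :: "word \<Rightarrow> word" where
  "reduce w = foldr red_step w []"

definition reduced :: "word \<Rightarrow> bool" where
  "reduced w \<longleftrightarrow> reduce w = w"

definition fmult :: "word \<Rightarrow> word \<Rightarrow> word" (infixl "\<cdot>" 70) where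
  "u \<cdot> v = reduce (u @ v)"

definition gx :: word where "gx = [(GX, True)]"
definition gy :: word where "gy = [(GY, True)]"

definition fpow :: "word \<Rightarrow> int \<Rightarrow> word" where
  "fpow w k = reduce (if 0 \<le> k then concat (replicate (nat k) w)
                      else concat (replicate (nat (- k)) (inv_word w)))"

inductive_set ncl :: "word set \<Rightarrow> word set" for R :: "word set" where
  ncl_one: "[] \<in> ncl R"
| ncl_conj: "r \<in> R \<Longrightarrow> reduce (w @ r @ inv_word w) \<in> ncl R"
| ncl_inv: "a \<in> ncl R \<Longrightarrow> inv_word a \<in> ncl R"
| ncl_mult: "a \<in> ncl R \<Longrightarrow> b \<in> ncl R \<Longrightarrow> a \<cdot> b \<in> ncl R"

definition ext_hom :: "(gen \<Rightarrow> word) \<Rightarrow> word \<Rightarrow> word" where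
  "ext_hom f w = reduce (concat (map (\<lambda>(g, b). if b then f g else inv_word (f g)) w))"

definition free_aut :: "(word \<Rightarrow> word) \<Rightarrow> bool" where
  "free_aut \<phi> \<longleftrightarrow> (\<exists>f. \<phi> = ext_hom f \<and> bij_betw \<phi> {w. reduced w} {w. reduced w})"

text \<open>A presentation on generators x, y is given by its (ordered) list of relators.\<close>

definition Q_rels :: "nat \<Rightarrow> word list" where
  "Q_rels n = [fpow gx (int n) \<cdot> fpow gy (-2), gx \<cdot> gy \<cdot> gx \<cdot> fpow gy (-1)]"

definition P_rels :: "nat \<Rightarrow> int \<Rightarrow> int \<Rightarrow> word list" where
  "P_rels n n1 m1 = [fpow gx (int n) \<cdot> fpow gy (-2),
     fpow gx n1 \<cdot> gy \<cdot> fpow gx m1 \<cdot> fpow gy (-1) \<cdot> fpow gx (1 - n1) \<cdot> gy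
       \<cdot> fpow gx (1 - m1) \<cdot> fpow gy (-1)]"

definition E_rels :: "nat \<Rightarrow> int \<Rightarrow> word list" where
  "E_rels n r = P_rels n 2 (1 - r)"

text \<open>Regularity: x \<mapsto> x, y \<mapsto> y induces an isomorphism F/N(P) \<rightarrow> F/N(Q_{4n}),
  i.e. the two normal closures coincide.\<close>
definition regular :: "nat \<Rightarrow> int \<Rightarrow> int \<Rightarrow> bool" where
  "regular n n1 m1 \<longleftrightarrow> ncl (set (P_rels n n1 m1)) = ncl (set (Q_rels n))"

inductive qmove :: "word list \<Rightarrow> word list \<Rightarrow> bool" where
  qm_mult: "i < length rs \<Longrightarrow> j < length rs \<Longrightarrow> i \<noteq> j \<Longrightarrow>
     qmove rs (rs[i := (rs ! i) \<cdot> (rs ! j)])"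
| qm_inv: "i < length rs \<Longrightarrow> qmove rs (rs[i := inv_word (rs ! i)])"
| qm_conj: "i < length rs \<Longrightarrow> qmove rs (rs[i := w \<cdot> (rs ! i) \<cdot> inv_word w])"
| qm_aut: "free_aut \<phi> \<Longrightarrow> qmove rs (map \<phi> rs)"

definition Qstar_equiv :: "word list \<Rightarrow> word list \<Rightarrow> bool" where
  "Qstar_equiv P Q \<longleftrightarrow> (sup qmove qmove\<inverse>\<inverse>)\<^sup>*\<^sup>* (map reduce P) (map reduce Q)"

end

theory Submission
  imports Defs
begin


fun rd :: "word \<Rightarrow> bool" where
  "rd [] = True" | "rd [a] = True"
| "rd (a # b # w) = (b \<noteq> inv_letter a \<and> rd (b # w))"

lemma inv_inv_letter[simp]: "inv_letter (inv_letter a) = a" by (cases a) simp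
lemma inv_letter_eq_iff: "inv_letter a = b \<longleftrightarrow> a = inv_letter b" by (cases a; cases b) auto

lemma reduce_Nil[simp]: "reduce [] = []" by (simp add: reduce_def)
lemma reduce_Cons: "reduce (a # w) = red_step a (reduce w)" by (simp add: reduce_def)
lemma reduce_append: "reduce (u @ v) = foldr red_step u (reduce v)" by (simp add: reduce_def)

lemma rd_tl: "rd (a # w) \<Longrightarrow> rd w" by (cases w) auto

lemma rd_red_step: "rd w \<Longrightarrow> rd (red_step a w)"
  by (cases w) (auto dest: rd_tl)

lemma rd_reduce: "rd (reduce w)"
  by (induction w) (auto simp: reduce_Cons rd_red_step)

lemma rd_reduce_id: "rd w \<Longrightarrow> reduce w = w"
  by (induction w rule: rd.induct) (auto simp: reduce_Cons)

lemma reduced_iff: "reduced w \<longleftrightarrow> rd w"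
  unfolding reduced_def by (metis rd_reduce rd_reduce_id)

lemma reduce_reduce[simp]: "reduce (reduce w) = reduce w"
  by (simp add: rd_reduce rd_reduce_id)

lemma red_cancel: "rd w \<Longrightarrow> red_step (inv_letter a) (red_step a w) = w"
proof (cases w)
  case (Cons b bs)
  assume r: "rd w"
  show ?thesis
  proof (cases "b = inv_letter a")
    case True
    then show ?thesis using r Cons by (cases bs) (auto simp: inv_letter_eq_iff)
  qed (use Cons in auto)
qed simp

lemma reduce_red_step_app: "rd r \<Longrightarrow> reduce (red_step a r @ v) = red_step a (reduce (r @ v))"
proof (cases r)
  case (Cons b bs)
  assume rr: "rd r"
  show ?thesis
  proof (cases "b = inv_letter a")
    case True
    have "red_step a (red_step b (reduce (bs @ v))) = reduce (bs @ v)"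
      using red_cancel[OF rd_reduce, of "inv_letter a" "bs @ v"] True by simp
    then show ?thesis using Cons True by (simp add: reduce_Cons)
  qed (use Cons in \<open>auto simp: reduce_Cons\<close>)
qed (simp add: reduce_Cons)

lemma reduce_left: "reduce (reduce u @ v) = reduce (u @ v)"
  by (induction u) (auto simp: reduce_Cons reduce_red_step_app rd_reduce)

lemma reduce_right: "reduce (u @ reduce v) = reduce (u @ v)"
  by (simp add: reduce_append)

lemma inv_word_Nil[simp]: "inv_word [] = []" by (simp add: inv_word_def)
lemma inv_word_Cons[simp]: "inv_word (a # w) = inv_word w @ [inv_letter a]" by (simp add: inv_word_def)
lemma inv_word_append[simp]: "inv_word (u @ v) = inv_word v @ inv_word u" by (simp add: inv_word_def)
lemma inv_word_inv_word[simp]: "inv_word (inv_word w) = w" by (simp add: inv_word_def rev_map comp_def)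

lemma reduce_inv_right[simp]: "reduce (w @ inv_word w) = []"
proof (induction w)
  case (Cons a w)
  have "reduce (w @ inv_word w @ [inv_letter a]) = [inv_letter a]"
    using reduce_left[of "w @ inv_word w" "[inv_letter a]"] Cons by (simp add: reduce_Cons)
  then show ?case by (simp add: reduce_Cons)
qed simp

lemma reduce_inv_left[simp]: "reduce (inv_word w @ w) = []"
  using reduce_inv_right[of "inv_word w"] by simp

lemma rd_snoc: "rd (w @ [a]) \<longleftrightarrow> rd w \<and> (w = [] \<or> a \<noteq> inv_letter (last w))"
proof (induction w rule: rd.induct)
qed auto

lemma last_inv_word: "w \<noteq> [] \<Longrightarrow> last (inv_word w) = inv_letter (hd w)"
  by (cases w) auto

lemma rd_inv_word: "rd w \<Longrightarrow> rd (inv_word w)"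
proof (induction w)
  case (Cons a w)
  have r: "rd (inv_word w)" using Cons rd_tl by blast
  show ?case
  proof (cases w)
    case (Cons b bs)
    have "b \<noteq> inv_letter a" using Cons.prems Cons by simp
    then have "inv_letter a \<noteq> inv_letter (last (inv_word w))"
      using Cons by (auto simp: last_inv_word inv_letter_eq_iff)
    then show ?thesis using r by (simp only: inv_word_Cons rd_snoc) simp
  qed simp
qed simp

lemma reduce_inv_word: "reduce (inv_word w) = inv_word (reduce w)"
proof -
  let ?r = "reduce w"
  have "reduce (inv_word w) = reduce (inv_word w @ reduce (?r @ inv_word ?r))" by simp
  also have "\<dots> = reduce ((inv_word w @ ?r) @ inv_word ?r)" by (simp only: reduce_right append_assoc)
  also have "\<dots> = reduce (reduce (inv_word w @ ?r) @ inv_word ?r)" by (simp only: reduce_left)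
  also have "reduce (inv_word w @ ?r) = []" by (simp add: reduce_right)
  finally show ?thesis by (simp add: rd_reduce_id rd_inv_word rd_reduce)
qed



typedef fg = "{w. reduced w}" morphisms rep abs_fg
  by (rule exI[of _ "[]"]) (simp add: reduced_def)

lemma rd_rep: "rd (rep g)" using rep[of g] by (simp add: reduced_iff)
lemma reduce_rep[simp]: "reduce (rep g) = rep g" by (simp add: rd_rep rd_reduce_id)
lemma rep_abs: "rd w \<Longrightarrow> rep (abs_fg w) = w"
  by (simp add: abs_fg_inverse reduced_iff)
lemma rep_abs_reduce[simp]: "rep (abs_fg (reduce w)) = reduce w"
  by (simp add: rep_abs rd_reduce)

instantiation fg :: group_add begin
definition "0 = abs_fg []"
definition "a + b = abs_fg (reduce (rep a @ rep b))"
definition "- a = abs_fg (inv_word (rep a))"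
definition "a - b = a + - (b::fg)"
lemma rep_zero[simp]: "rep 0 = []" by (simp add: zero_fg_def rep_abs)
lemma rep_plus: "rep (a + b) = reduce (rep a @ rep b)" by (simp add: plus_fg_def)
lemma rep_uminus: "rep (- a) = inv_word (rep a)"
  by (simp add: uminus_fg_def rep_abs rd_inv_word rd_rep)
instance proof
  fix a b c :: fg
  show "a + b + c = a + (b + c)"
    by (simp add: rep_inject[symmetric] rep_plus reduce_left reduce_right)
  show "0 + a = a" by (simp add: rep_inject[symmetric] rep_plus)
  show "a + 0 = a" by (simp add: rep_inject[symmetric] rep_plus)
  show "- a + a = 0" by (simp add: rep_inject[symmetric] rep_plus rep_uminus)
  show "a + - b = a - b" by (simp add: minus_fg_def)
qed
end

lemma fmult_rep: "rep a \<cdot> rep b = rep (a + b)" by (simp add: fmult_def rep_plus)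
lemma inv_word_rep: "inv_word (rep a) = rep (- a)" by (simp add: rep_uminus)

lemma abs_rep_eq: "rd w \<Longrightarrow> w = rep a \<longleftrightarrow> abs_fg w = a"
  using rep_abs rep_inverse by metis

lemmas gsimps0 = add.assoc diff_conv_add_uminus minus_add

fun pw :: "fg \<Rightarrow> nat \<Rightarrow> fg" where
  "pw g 0 = 0" | "pw g (Suc m) = g + pw g m"

definition zp :: "fg \<Rightarrow> int \<Rightarrow> fg" where
  "zp g k = (if 0 \<le> k then pw g (nat k) else pw (- g) (nat (- k)))"

lemma zp_0[simp]: "zp g 0 = 0" by (simp add: zp_def)

lemma zp_neg_alt: "k \<le> 0 \<Longrightarrow> zp g k = pw (- g) (nat (- k))"
  by (cases "k = 0") (auto simp: zp_def)

lemma zp_succ: "zp g (k + 1) = g + zp g k"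
proof (cases "0 \<le> k")
  case True
  then have "nat (k + 1) = Suc (nat k)" by simp
  then show ?thesis using True by (simp add: zp_def)
next
  case False
  then have e: "nat (- k) = Suc (nat (- (k + 1)))" by simp
  have "zp g (k + 1) = pw (- g) (nat (- (k + 1)))" using False by (intro zp_neg_alt) simp
  also have "\<dots> = g + zp g k" using False by (simp add: zp_def e del: add_uminus_conv_diff)
  finally show ?thesis .
qed

lemma zp_pred: "zp g (k - 1) = - g + zp g k"
  using zp_succ[of g "k - 1"] by (simp del: add_uminus_conv_diff)

lemma zp_add: "zp g a + zp g b = zp g (a + b)"
proof (induction a rule: int_induct[where k = 0])
  case (step1 i)
  have "zp g (i + 1) + zp g b = g + (zp g i + zp g b)" by (simp add: zp_succ add.assoc del: add_uminus_conv_diff)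
  also have "\<dots> = zp g (i + b + 1)" using step1 by (simp add: zp_succ)
  finally show ?case by (simp add: algebra_simps)
next
  case (step2 i)
  have "zp g (i - 1) + zp g b = - g + (zp g i + zp g b)" by (simp add: zp_pred add.assoc del: add_uminus_conv_diff)
  also have "\<dots> = zp g (i + b - 1)" using step2 by (simp add: zp_pred)
  finally show ?case by (simp add: algebra_simps)
qed simp

lemma zp_add_assoc: "zp g a + (zp g b + c) = zp g (a + b) + c"
  by (simp add: zp_add add.assoc[symmetric] del: add_uminus_conv_diff)

lemma zp_minus: "- zp g k = zp g (- k)"
  by (rule minus_unique) (simp add: zp_add)

lemma zp_1: "zp g 1 = g" using zp_succ[of g 0] by simp

lemma zp_base_neg: "zp (- g) k = zp g (- k)"
proof (induction k rule: int_induct[where k = 0])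
  case (step1 i)
  then show ?case using zp_succ[of "- g" i] zp_pred[of g "- i"] by simp
next
  case (step2 i)
  then show ?case using zp_pred[of "- g" i] zp_succ[of g "- i"] by simp
qed simp

lemma zp_m1: "zp g (-1) = - g" by (simp add: zp_def)
lemma zp_m2: "zp g (-2) = - g + - g"
  by (simp add: zp_def numeral_2_eq_2 del: add_uminus_conv_diff)

lemma pw_rep: "reduce (concat (replicate m w)) = rep (pw (abs_fg (reduce w)) m)"
proof (induction m)
  case (Suc m)
  have "reduce (concat (replicate (Suc m) w)) = reduce (reduce w @ reduce (concat (replicate m w)))"
    by (simp add: reduce_left reduce_right)
  then show ?case using Suc by (simp add: rep_plus)
qed simp

lemma fpow_rep: "fpow w k = rep (zp (abs_fg (reduce w)) k)"
proof (cases "0 \<le> k")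
  case True then show ?thesis by (simp add: fpow_def zp_def pw_rep)
next
  case False
  have "abs_fg (reduce (inv_word w)) = - abs_fg (reduce w)"
    by (simp add: rep_inject[symmetric] rep_uminus reduce_inv_word rep_abs rd_inv_word rd_reduce)
  then show ?thesis using False by (simp add: fpow_def zp_def pw_rep)
qed

definition G :: "gen \<Rightarrow> fg" where "G x = abs_fg [(x, True)]"
abbreviation "X \<equiv> G GX"
abbreviation "Y \<equiv> G GY"

lemma rep_G: "rep (G x) = [(x, True)]" by (simp add: G_def rep_abs)
lemma gx_rep: "gx = rep X" by (simp add: gx_def rep_G)
lemma gy_rep: "gy = rep Y" by (simp add: gy_def rep_G)
lemma fpow_gx: "fpow gx k = rep (zp X k)"
  by (simp add: fpow_rep gx_def G_def[symmetric] rd_reduce_id)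
lemma fpow_gy: "fpow gy k = rep (zp Y k)"
  by (simp add: fpow_rep gy_def G_def[symmetric] rd_reduce_id)



definition img :: "(gen \<Rightarrow> word) \<Rightarrow> gen \<times> bool \<Rightarrow> word" where
  "img f = (\<lambda>(g, b). if b then f g else inv_word (f g))"

definition HH :: "(gen \<Rightarrow> word) \<Rightarrow> word \<Rightarrow> word" where
  "HH f w = concat (map (img f) w)"

lemma ext_hom_HH: "ext_hom f w = reduce (HH f w)"
  by (simp add: ext_hom_def HH_def img_def)

lemma HH_Cons[simp]: "HH f (a # w) = img f a @ HH f w" by (simp add: HH_def)
lemma HH_Nil[simp]: "HH f [] = []" by (simp add: HH_def)
lemma HH_append[simp]: "HH f (u @ v) = HH f u @ HH f v" by (simp add: HH_def)
lemma img_inv: "img f (inv_letter a) = inv_word (img f a)"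
  by (cases a) (simp add: img_def)

lemma HH_red_step: "rd r \<Longrightarrow> reduce (HH f (red_step a r)) = reduce (img f a @ HH f r)"
proof (cases r)
  case (Cons b bs)
  assume rr: "rd r"
  show ?thesis
  proof (cases "b = inv_letter a")
    case True
    have "reduce (img f a @ HH f r) = reduce (reduce (img f a @ inv_word (img f a)) @ HH f bs)"
      using Cons True by (simp only: reduce_left HH_Cons img_inv append_assoc)
    then show ?thesis using Cons True by simp
  qed (use Cons in simp)
qed simp

lemma HH_reduce: "reduce (HH f (reduce w)) = reduce (HH f w)"
proof (induction w)
  case (Cons a w)
  have "reduce (HH f (reduce (a # w))) = reduce (img f a @ HH f (reduce w))"
    by (simp add: reduce_Cons HH_red_step rd_reduce)
  also have "\<dots> = reduce (img f a @ reduce (HH f (reduce w)))" by (simp add: reduce_right)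
  also have "\<dots> = reduce (img f a @ HH f w)" by (simp add: Cons reduce_right)
  finally show ?case by simp
qed simp

definition hf :: "(gen \<Rightarrow> word) \<Rightarrow> fg \<Rightarrow> fg" where
  "hf f g = abs_fg (ext_hom f (rep g))"

lemma rep_hf: "rep (hf f g) = ext_hom f (rep g)"
  by (simp add: hf_def ext_hom_HH)

lemma hf_plus[simp]: "hf f (a + b) = hf f a + hf f b"
proof -
  have "ext_hom f (rep (a + b)) = reduce (HH f (rep a @ rep b))"
    by (simp add: ext_hom_HH rep_plus HH_reduce)
  also have "\<dots> = reduce (reduce (HH f (rep a)) @ reduce (HH f (rep b)))"
    by (simp add: reduce_left reduce_right)
  finally show ?thesis by (simp add: rep_inject[symmetric] rep_hf rep_plus ext_hom_HH)
qed

lemma hf_zero[simp]: "hf f 0 = 0"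
  by (simp add: rep_inject[symmetric] rep_hf ext_hom_HH)

lemma hf_uminus[simp]: "hf f (- a) = - hf f a"
proof -
  have "hf f a + hf f (- a) = 0" by (simp flip: hf_plus)
  then show ?thesis by (metis minus_unique)
qed

lemma hf_G: "hf f (G x) = abs_fg (reduce (f x))"
  by (simp add: hf_def ext_hom_HH rep_G img_def)

lemma hf_zp[simp]: "hf f (zp g k) = zp (hf f g) k"
proof (induction k rule: int_induct[where k = 0])
  case (step1 i) then show ?case by (simp add: zp_succ)
next
  case (step2 i) then show ?case by (simp add: zp_pred del: add_uminus_conv_diff)
qed simp

definition letter :: "gen \<times> bool \<Rightarrow> fg" where
  "letter a = (if snd a then G (fst a) else - G (fst a))"

lemma rep_letter: "rep (letter a) = [a]"
  by (cases a) (auto simp: letter_def rep_uminus rep_G)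

lemma fg_induct: 
  assumes "P 0" "\<And>a g. P g \<Longrightarrow> P (letter a + g)"
  shows "P g"
proof -
  have "\<forall>g. rep g = w \<longrightarrow> P g" for w
  proof (induction w)
    case Nil then show ?case using assms(1) by (metis rep_zero rep_inject)
  next
    case (Cons a w)
    show ?case
    proof (intro allI impI)
      fix g assume g: "rep g = a # w"
      have ra: "rd (a # w)" using rd_rep[of g] g by simp
      then have rw: "rd w" by (rule rd_tl)
      have "rep (letter a + abs_fg w) = a # w"
        using rw ra by (simp add: rep_plus rep_letter rep_abs rd_reduce_id)
      then have "g = letter a + abs_fg w" using g rep_inject by metis
      moreover have "P (abs_fg w)" using Cons rep_abs[OF rw] by blast
      ultimately show "P g" using assms(2) by blast
    qed
  qed
  then show ?thesis by blast
qed

lemma hom_eq: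
  fixes h1 h2 :: "fg \<Rightarrow> fg"
  assumes "\<And>a b. h1 (a + b) = h1 a + h1 b" "\<And>a b. h2 (a + b) = h2 a + h2 b"
    and "\<And>x. h1 (G x) = h2 (G x)"
  shows "h1 g = h2 g"
proof -
  have m: "h (- a) = - h a" if "\<And>a b. h (a + b) = h a + h b" for h :: "fg \<Rightarrow> fg" and a
  proof -
    have "h 0 + h 0 = h 0 + 0" using that[of 0 0] by simp
    then have z: "h 0 = 0" by (simp only: add_left_cancel)
    have "h a + h (- a) = 0" using that[of a "- a"] z by simp
    then show ?thesis by (metis minus_unique)
  qed
  have "h1 0 + h1 0 = h1 0 + 0" "h2 0 + h2 0 = h2 0 + 0" using assms(1)[of 0 0] assms(2)[of 0 0] by simp_all
  then have z: "h1 0 = 0" "h2 0 = 0" by (simp_all only: add_left_cancel)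
  show ?thesis
  proof (induction g rule: fg_induct)
    case (2 a g)
    have "h1 (letter a) = h2 (letter a)"
      by (auto simp: letter_def m[OF assms(1)] m[OF assms(2)] assms(3))
    then show ?case using 2 assms(1,2) by simp
  qed (use z in simp)
qed

lemma free_aut_inv:
  assumes "\<And>g. hf f (hf f g) = g"
  shows "free_aut (ext_hom f)"
  unfolding free_aut_def
proof (intro exI conjI)
  have r: "reduced (ext_hom f w)" for w by (simp add: ext_hom_HH reduced_iff rd_reduce)
  have i: "ext_hom f (ext_hom f w) = w" if "reduced w" for w
  proof -
    have "w = rep (abs_fg w)" using that by (simp add: rep_abs reduced_iff)
    then show ?thesis using assms[of "abs_fg w"] by (metis rep_hf)
  qed
  show "bij_betw (ext_hom f) {w. reduced w} {w. reduced w}"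
    by (rule bij_betw_byWitness[where f' = "ext_hom f"]) (use r i in auto)
qed simp



lemmas gsimps = add.assoc diff_conv_add_uminus minus_add zp_add zp_add_assoc zp_minus zp_base_neg

definition fs :: "gen \<Rightarrow> word" where "fs x = rep (- G x)"
definition fp :: "nat \<Rightarrow> gen \<Rightarrow> word" where
  "fp n x = (case x of GX \<Rightarrow> rep (- X) | GY \<Rightarrow> rep (Y + zp X (- int n)))"

lemma hfs_G[simp]: "hf fs (G x) = - G x" by (simp add: hf_G fs_def rep_inverse)
lemma hfp_X[simp]: "hf (fp n) X = - X" by (simp add: hf_G fp_def rep_inverse)
lemma hfp_Y[simp]: "hf (fp n) Y = Y + zp X (- int n)" by (simp add: hf_G fp_def rep_inverse)

lemma hfs_inv: "hf fs (hf fs g) = g"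
  by (rule hom_eq[of "\<lambda>g. hf fs (hf fs g)" "\<lambda>g. g"]) simp_all

lemma hfp_inv: "hf (fp n) (hf (fp n) g) = g"
proof (rule hom_eq[of "\<lambda>g. hf (fp n) (hf (fp n) g)" "\<lambda>g. g"])
  fix x show "hf (fp n) (hf (fp n) (G x)) = G x"
    by (cases x) (simp_all add: gsimps del: add_uminus_conv_diff)
qed simp_all

lemma aut_fs: "free_aut (ext_hom fs)" by (rule free_aut_inv) (rule hfs_inv)
lemma aut_fp: "free_aut (ext_hom (fp n))" by (rule free_aut_inv) (rule hfp_inv)

lemma fpow_X: "fpow (rep X) k = rep (zp X k)" using fpow_gx gx_rep by simp
lemma fpow_Y: "fpow (rep Y) k = rep (zp Y k)" using fpow_gy gy_rep by simp

definition q1 :: "nat \<Rightarrow> fg" where "q1 n = zp X (int n) + (- Y + - Y)"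
definition q2 :: fg where "q2 = X + Y + X + - Y"
definition RR :: "int \<Rightarrow> int \<Rightarrow> fg" where
  "RR a b = zp X a + Y + zp X b + - Y + zp X (1 - a) + Y + zp X (1 - b) + - Y"

lemma P_rels_rep: "P_rels n a b = map rep [q1 n, RR a b]"
  by (simp add: P_rels_def fpow_X fpow_Y gx_rep gy_rep fmult_rep zp_m1 zp_m2 q1_def RR_def
      del: add_uminus_conv_diff)

lemma Q_rels_rep: "Q_rels n = map rep [q1 n, q2]"
  by (simp add: Q_rels_def fpow_X fpow_Y gx_rep gy_rep fmult_rep zp_m1 zp_m2 q1_def q2_def
      del: add_uminus_conv_diff)


lemmas cur = gsimps zp_base_neg minus_minus left_minus right_minus zp_0 add_0_left add_0_right
  add_minus_cancel minus_add_cancel hf_plus hf_uminus hf_zp hfs_G hfp_X hfp_Y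

lemma I1: "(Y + Y) + - hf fs (q1 n) + - (Y + Y) = q1 n"
  by (simp only: q1_def q2_def RR_def cur; (intro refl arg_cong2[where f="(+) :: fg \<Rightarrow> fg \<Rightarrow> fg"] arg_cong[where f="zp X"]; simp)?)
lemma I1': "hf fs (q1 n) = (- Y + - Y) + - (q1 n) + - (- Y + - Y)"
  by (simp only: q1_def q2_def RR_def cur; (intro refl arg_cong2[where f="(+) :: fg \<Rightarrow> fg \<Rightarrow> fg"] arg_cong[where f="zp X"]; simp)?)
lemma I2: "(zp X b + Y + zp X a) + - hf fs (RR a b) + - (zp X b + Y + zp X a) = RR b a"
  by (simp only: q1_def q2_def RR_def cur; (intro refl arg_cong2[where f="(+) :: fg \<Rightarrow> fg \<Rightarrow> fg"] arg_cong[where f="zp X"]; simp)?)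
lemma I2': "hf fs (RR a b) = - (zp X b + Y + zp X a) + - (RR b a) + - (- (zp X b + Y + zp X a))"
  by (simp only: q1_def q2_def RR_def cur; (intro refl arg_cong2[where f="(+) :: fg \<Rightarrow> fg \<Rightarrow> fg"] arg_cong[where f="zp X"]; simp)?)
lemma I3: "hf fs q2 = - Y + - q2 + - (- Y)"
  by (simp only: q1_def q2_def RR_def cur; (intro refl arg_cong2[where f="(+) :: fg \<Rightarrow> fg \<Rightarrow> fg"] arg_cong[where f="zp X"]; simp)?)
lemma I4: "Y + hf (fp n) (q1 n) + - Y = q1 n"
  by (simp only: q1_def q2_def RR_def cur; (intro refl arg_cong2[where f="(+) :: fg \<Rightarrow> fg \<Rightarrow> fg"] arg_cong[where f="zp X"]; simp)?)
lemma I5: "zp X c + - hf (fp n) (RR c d) + - zp X c = RR c (1 - d)"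
  by (simp only: q1_def q2_def RR_def cur; (intro refl arg_cong2[where f="(+) :: fg \<Rightarrow> fg \<Rightarrow> fg"] arg_cong[where f="zp X"]; simp)?)

abbreviation QS where "QS \<equiv> (sup qmove qmove\<inverse>\<inverse>)\<^sup>*\<^sup>*"

lemma mv_aut: "free_aut (ext_hom f) \<Longrightarrow> map (hf f) gs = gs' \<Longrightarrow> qmove (map rep gs) (map rep gs')"
proof -
  assume a: "free_aut (ext_hom f)" "map (hf f) gs = gs'"
  have "map (ext_hom f) (map rep gs) = map rep gs'" using a(2) by (auto simp: rep_hf)
  then show ?thesis using qm_aut[OF a(1), of "map rep gs"] by simp
qed

lemma mv_inv: "i < length gs \<Longrightarrow> gs' = gs[i := - (gs ! i)] \<Longrightarrow> qmove (map rep gs) (map rep gs')"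
  using qm_inv[of i "map rep gs"] by (simp add: map_update inv_word_rep)

lemma mv_conj: "i < length gs \<Longrightarrow> gs' = gs[i := c + gs ! i + - c] \<Longrightarrow> qmove (map rep gs) (map rep gs')"
  using qm_conj[of i "map rep gs" "rep c"] by (simp add: map_update inv_word_rep fmult_rep)

lemma QS_step: "QS a b \<Longrightarrow> qmove b c \<Longrightarrow> QS a c"
  by (simp add: rtranclp.rtrancl_into_rtrancl)

lemma map_reduce_rep: "map reduce (map rep gs) = map rep gs" by simp

lemma swap_equiv: "Qstar_equiv (P_rels n a b) (P_rels n b a)"
proof -
  let ?s1 = "hf fs (q1 n)" and ?s2 = "hf fs (RR a b)"
  have "QS (map rep [q1 n, RR a b]) (map rep [?s1, ?s2])"
    by (rule QS_step[OF rtranclp.rtrancl_refl]) (rule mv_aut[OF aut_fs], simp)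
  moreover have "qmove (map rep [?s1, ?s2]) (map rep [- ?s1, ?s2])" by (rule mv_inv[of 0]) simp_all
  moreover have "qmove (map rep [- ?s1, ?s2]) (map rep [q1 n, ?s2])"
    by (rule mv_conj[of 0 _ _ "Y + Y"]) (simp_all add: I1 del: add_uminus_conv_diff)
  moreover have "qmove (map rep [q1 n, ?s2]) (map rep [q1 n, - ?s2])" by (rule mv_inv[of 1]) simp_all
  moreover have "qmove (map rep [q1 n, - ?s2]) (map rep [q1 n, RR b a])"
    by (rule mv_conj[of 1 _ _ "zp X b + Y + zp X a"]) (simp_all add: I2 del: add_uminus_conv_diff)
  ultimately have "QS (map rep [q1 n, RR a b]) (map rep [q1 n, RR b a])"
    using QS_step by blast
  then show ?thesis unfolding Qstar_equiv_def P_rels_rep map_reduce_rep .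
qed

lemma flip_equiv: "Qstar_equiv (P_rels n c d) (P_rels n c (1 - d))"
proof -
  let ?s1 = "hf (fp n) (q1 n)" and ?s2 = "hf (fp n) (RR c d)"
  have "QS (map rep [q1 n, RR c d]) (map rep [?s1, ?s2])"
    by (rule QS_step[OF rtranclp.rtrancl_refl]) (rule mv_aut[OF aut_fp], simp)
  moreover have "qmove (map rep [?s1, ?s2]) (map rep [q1 n, ?s2])"
    by (rule mv_conj[of 0 _ _ "Y"]) (simp_all add: I4 del: add_uminus_conv_diff)
  moreover have "qmove (map rep [q1 n, ?s2]) (map rep [q1 n, - ?s2])" by (rule mv_inv[of 1]) simp_all
  moreover have "qmove (map rep [q1 n, - ?s2]) (map rep [q1 n, RR c (1 - d)])"
    by (rule mv_conj[of 1 _ _ "zp X c"]) (simp_all add: I5 del: add_uminus_conv_diff)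
  ultimately have "QS (map rep [q1 n, RR c d]) (map rep [q1 n, RR c (1 - d)])"
    using QS_step by blast
  then show ?thesis unfolding Qstar_equiv_def P_rels_rep map_reduce_rep .
qed



definition NN :: "word set \<Rightarrow> fg set" where "NN R = {g. rep g \<in> ncl R}"

lemma ncl_rd: "x \<in> ncl R \<Longrightarrow> rd x"
  by (induction rule: ncl.induct) (auto simp: rd_reduce rd_inv_word fmult_def)

lemma NN_zero: "0 \<in> NN R" by (simp add: NN_def ncl.ncl_one)
lemma NN_plus: "a \<in> NN R \<Longrightarrow> b \<in> NN R \<Longrightarrow> a + b \<in> NN R"
  unfolding NN_def using ncl.ncl_mult fmult_rep by fastforce
lemma NN_uminus: "a \<in> NN R \<Longrightarrow> - a \<in> NN R"
  unfolding NN_def using ncl.ncl_inv inv_word_rep by fastforce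

lemma conj_rep: "reduce (w @ r @ inv_word w) =
    rep (abs_fg (reduce w) + abs_fg (reduce r) + - abs_fg (reduce w))"
proof -
  have "reduce (w @ r @ inv_word w) = reduce (reduce (reduce w @ reduce r) @ reduce (inv_word w))"
    by (simp add: reduce_left reduce_right)
  then show ?thesis by (simp add: rep_plus rep_uminus reduce_inv_word del: add_uminus_conv_diff)
qed

lemma NN_gen: "rep h \<in> R \<Longrightarrow> h \<in> NN R"
  unfolding NN_def using ncl.ncl_conj[of "rep h" R "[]"] by simp

lemma abs_rep_of: "rd x \<Longrightarrow> rep (abs_fg x) = x" by (rule rep_abs)

lemma NN_conj_aux: "x \<in> ncl R \<Longrightarrow> \<forall>c. c + abs_fg x + - c \<in> NN R"
proof (induction rule: ncl.induct)
  case ncl_one then show ?case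
    by (simp add: NN_zero flip: zero_fg_def)
next
  case (ncl_conj r w)
  show ?case
  proof
    fix c
    let ?d = "abs_fg (reduce w)" and ?h = "abs_fg (reduce r)"
    have e: "abs_fg (reduce (w @ r @ inv_word w)) = ?d + ?h + - ?d"
      by (simp add: conj_rep rep_inverse)
    have "c + (?d + ?h + - ?d) + - c = (c + ?d) + ?h + - (c + ?d)"
      by (simp add: add.assoc minus_add del: add_uminus_conv_diff)
    also have "\<dots> \<in> NN R"
      using ncl.ncl_conj[OF ncl_conj.hyps, of "rep (c + ?d)"] unfolding NN_def
      by (simp add: conj_rep rep_inverse)
    finally show "c + abs_fg (reduce (w @ r @ inv_word w)) + - c \<in> NN R" using e by simp
  qed
next
  case (ncl_inv a)
  have "abs_fg (inv_word a) = - abs_fg a"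
    using ncl_rd[OF ncl_inv.hyps] by (simp add: rep_inject[symmetric] rep_uminus rep_abs rd_inv_word)
  moreover have "c + - abs_fg a + - c = - (c + abs_fg a + - c)" for c
    by (simp add: add.assoc minus_add del: add_uminus_conv_diff)
  ultimately show ?case using ncl_inv.IH NN_uminus by metis
next
  case (ncl_mult a b)
  have "abs_fg (a \<cdot> b) = abs_fg a + abs_fg b"
    using ncl_rd[OF ncl_mult.hyps(1)] ncl_rd[OF ncl_mult.hyps(2)]
    by (simp add: rep_inject[symmetric] rep_plus rep_abs fmult_def rd_reduce)
  moreover have "c + (A + B) + - c = (c + A + - c) + (c + B + - c)" for c A B :: fg
    by (simp add: add.assoc del: add_uminus_conv_diff)
  ultimately show ?case using ncl_mult.IH NN_plus by metis
qed

lemma NN_conj: "a \<in> NN R \<Longrightarrow> c + a + - c \<in> NN R"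
  using NN_conj_aux[of "rep a" R] by (simp add: NN_def rep_inverse)

lemma NN_hom:
  fixes h :: "fg \<Rightarrow> fg"
  assumes hp: "\<And>a b. h (a + b) = h a + h b" and hm: "\<And>a. h (- a) = - h a" and h0: "h 0 = 0"
    and gen: "\<And>r. r \<in> R \<Longrightarrow> h (abs_fg (reduce r)) \<in> NN T"
    and g: "g \<in> NN R"
  shows "h g \<in> NN T"
proof -
  have "x \<in> ncl R \<Longrightarrow> h (abs_fg x) \<in> NN T" for x
  proof (induction rule: ncl.induct)
    case ncl_one then show ?case by (simp add: h0 NN_zero flip: zero_fg_def)
  next
    case (ncl_conj r w)
    have e: "abs_fg (reduce (w @ r @ inv_word w)) = abs_fg (reduce w) + abs_fg (reduce r) + - abs_fg (reduce w)"
      by (simp add: conj_rep rep_inverse)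
    show ?case unfolding e hp hm using NN_conj gen[OF ncl_conj.hyps] by blast
  next
    case (ncl_inv a)
    have "abs_fg (inv_word a) = - abs_fg a"
      using ncl_rd[OF ncl_inv.hyps] by (simp add: rep_inject[symmetric] rep_uminus rep_abs rd_inv_word)
    then show ?case using ncl_inv.IH NN_uminus hm by metis
  next
    case (ncl_mult a b)
    have "abs_fg (a \<cdot> b) = abs_fg a + abs_fg b"
      using ncl_rd[OF ncl_mult.hyps(1)] ncl_rd[OF ncl_mult.hyps(2)]
      by (simp add: rep_inject[symmetric] rep_plus rep_abs fmult_def rd_reduce)
    then show ?case using ncl_mult.IH NN_plus hp by metis
  qed
  then show ?thesis using g by (metis NN_def mem_Collect_eq rep_inverse)
qed

lemma ncl_eq: "NN A = NN B \<Longrightarrow> ncl A = ncl B"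
proof -
  have "ncl A = rep ` NN A" for A
  proof
    show "ncl A \<subseteq> rep ` NN A"
    proof
      fix x assume x: "x \<in> ncl A"
      then have "x = rep (abs_fg x)" using ncl_rd rep_abs by metis
      then show "x \<in> rep ` NN A" using x unfolding NN_def by (metis image_eqI mem_Collect_eq)
    qed
  qed (auto simp: NN_def)
  then show "NN A = NN B \<Longrightarrow> ncl A = ncl B" by metis
qed

lemma hfs_hom_NN:
  assumes "\<And>r. r \<in> R \<Longrightarrow> hf fs (abs_fg (reduce r)) \<in> NN T" "g \<in> NN R"
  shows "hf fs g \<in> NN T"
  by (rule NN_hom[of "hf fs"]) (use assms in simp_all)

lemma conj_neg_NN: "a \<in> NN R \<Longrightarrow> c + - a + - c \<in> NN R"
  by (intro NN_conj NN_uminus)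

lemma A_Q: "g \<in> NN (set (Q_rels n)) \<Longrightarrow> hf fs g \<in> NN (set (Q_rels n))"
proof (rule hfs_hom_NN)
  fix r assume r: "r \<in> set (Q_rels n)"
  have m1: "q1 n \<in> NN (set (Q_rels n))" "q2 \<in> NN (set (Q_rels n))"
    by (auto intro!: NN_gen simp: Q_rels_rep)
  have "hf fs (q1 n) \<in> NN (set (Q_rels n))" by (subst I1') (rule conj_neg_NN[OF m1(1)])
  moreover have "hf fs q2 \<in> NN (set (Q_rels n))" by (subst I3) (rule conj_neg_NN[OF m1(2)])
  ultimately show "hf fs (abs_fg (reduce r)) \<in> NN (set (Q_rels n))"
    using r unfolding Q_rels_rep by (auto simp: rep_inverse)
qed

lemma B_P: "g \<in> NN (set (P_rels n a b)) \<Longrightarrow> hf fs g \<in> NN (set (P_rels n b a))"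
proof (rule hfs_hom_NN)
  fix r assume r: "r \<in> set (P_rels n a b)"
  have m1: "q1 n \<in> NN (set (P_rels n b a))" "RR b a \<in> NN (set (P_rels n b a))"
    by (auto intro!: NN_gen simp: P_rels_rep)
  have "hf fs (q1 n) \<in> NN (set (P_rels n b a))" by (subst I1') (rule conj_neg_NN[OF m1(1)])
  moreover have "hf fs (RR a b) \<in> NN (set (P_rels n b a))" by (subst I2') (rule conj_neg_NN[OF m1(2)])
  ultimately show "hf fs (abs_fg (reduce r)) \<in> NN (set (P_rels n b a))"
    using r unfolding P_rels_rep by (auto simp: rep_inverse)
qed

lemma regular_swap:
  assumes "regular n a b" shows "regular n b a"
proof -
  have eq: "NN (set (P_rels n a b)) = NN (set (Q_rels n))"
    using assms unfolding regular_def NN_def by simp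
  have "NN (set (P_rels n b a)) = NN (set (Q_rels n))"
  proof
    show "NN (set (P_rels n b a)) \<subseteq> NN (set (Q_rels n))"
    proof
      fix g assume "g \<in> NN (set (P_rels n b a))"
      then have "hf fs g \<in> NN (set (Q_rels n))" using B_P[of g n b a] eq by simp
      then show "g \<in> NN (set (Q_rels n))" using A_Q hfs_inv by metis
    qed
    show "NN (set (Q_rels n)) \<subseteq> NN (set (P_rels n b a))"
    proof
      fix g assume "g \<in> NN (set (Q_rels n))"
      then have "hf fs g \<in> NN (set (P_rels n a b))" using A_Q eq by simp
      then show "g \<in> NN (set (P_rels n b a))" using B_P hfs_inv by metis
    qed
  qed
  then show ?thesis unfolding regular_def by (rule ncl_eq)
qed

theorem proposition3p22:
  fixes n :: nat
  assumes "n \<ge> 2"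
  shows "(\<forall>n1 m1 :: int. regular n n1 m1 \<longrightarrow>
            regular n m1 n1 \<and> Qstar_equiv (P_rels n n1 m1) (P_rels n m1 n1))
       \<and> (\<forall>r :: int. Qstar_equiv (E_rels n r) (E_rels n (1 - r)))"
proof (intro conjI allI impI)
  fix n1 m1 :: int assume "regular n n1 m1"
  then show "regular n m1 n1" by (rule regular_swap)
  show "Qstar_equiv (P_rels n n1 m1) (P_rels n m1 n1)" by (rule swap_equiv)
next
  fix r :: int
  show "Qstar_equiv (E_rels n r) (E_rels n (1 - r))"
    using flip_equiv[of n 2 "1 - r"] by (simp add: E_rels_def)
qed

end
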